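(* Fix a finite alphabet $\Sigma$. For every $C_7\in\mathbb{N}$ there exists $C_9$, bounded by a polynomial in $C_7$ (the polynomial depending only on $|\Sigma|$), such that the following holds. Let $P,Q\subseteq[0..C_7]^\Sigma$ with $0\notin P$, $0\notin Q$, and $\bigoplus_{\mathbb{P}}P\cap\bigoplus_{\mathbb{P}}Q=\{0\}$. Then there is a linear function $\Phi:\mathbb{Q}^\Sigma\to\mathbb{Q}$ with integer coefficients, $\Phi(x)=\sum_{\sigma\in\Sigma}\phi_\sigma x_\sigma$ with $\phi\in\mathbb{Z}^\Sigma$, such that $\Phi(p)>0$ for all $p\in P$, $\Phi(q)<0$ for all $q\in Q$, and $\sum_\sigma|\phi_\sigma|\le C_9$.
   Context: $[0..C]=\{0,1,\ldots,C\}$; $\mathbb{P}$ is the set of non-negative rationals; for a set $B$ of vectors, $\bigoplus_{\mathbb{P}}B=\{\sum_{b\in B}\alpha_b b:\alpha_b\in\mathbb{P}\text{ for all } b\in B\}$. *)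

theory Defs
  imports Main "HOL-Computational_Algebra.Polynomial"
begin

definition box :: "nat \<Rightarrow> ('a \<Rightarrow> rat) set" where
  "box C = {v. \<forall>\<sigma>. \<exists>k::nat. k \<le> C \<and> v \<sigma> = of_nat k}"

definition pcone :: "('a \<Rightarrow> rat) set \<Rightarrow> ('a \<Rightarrow> rat) set" where
  "pcone B = {x. \<exists>\<alpha>::('a \<Rightarrow> rat) \<Rightarrow> rat. (\<forall>b\<in>B. \<alpha> b \<ge> 0) \<and>
                   x = (\<lambda>\<sigma>. \<Sum>b\<in>B. \<alpha> b * b \<sigma>)}"

end

theory Submission
  imports Defs "HOL-Analysis.Analysis"
begin

lemma det_int_bound:
  fixes A :: "real^'n^'n"
  assumes "\<And>i j. A$i$j \<in> \<int>" "\<And>i j. \<bar>A$i$j\<bar> \<le> c"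
  shows "det A \<in> \<int> \<and> \<bar>det A\<bar> \<le> fact CARD('n) * c ^ CARD('n)"
proof
  show "det A \<in> \<int>" unfolding det_def
    by (intro Ints_sum Ints_mult Ints_prod) (auto simp: assms)
  have c0: "c \<ge> 0" using assms(2) abs_ge_zero order_trans by blast
  have "\<bar>det A\<bar> \<le> (\<Sum>p\<in>{p. p permutes (UNIV::'n set)}. \<bar>of_int (sign p) * (\<Prod>i\<in>UNIV. A$i$p i)\<bar>)"
    unfolding det_def by (rule sum_abs)
  also have "\<dots> \<le> (\<Sum>p\<in>{p. p permutes (UNIV::'n set)}. c ^ CARD('n))"
  proof (rule sum_mono)
    fix p assume "p \<in> {p. p permutes (UNIV::'n set)}"
    have "\<bar>of_int (sign p) * (\<Prod>i\<in>UNIV. A$i$p i)\<bar> = (\<Prod>i\<in>UNIV. \<bar>A$i$p i\<bar>)"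
      by (simp add: abs_mult abs_prod sign_def)
    also have "\<dots> \<le> (\<Prod>i\<in>(UNIV::'n set). c)"
      by (rule prod_mono) (auto simp: assms)
    finally show "\<bar>of_int (sign p) * (\<Prod>i\<in>UNIV. A$i$p i)\<bar> \<le> c ^ CARD('n)" by simp
  qed
  also have "\<dots> = fact CARD('n) * c ^ CARD('n)"
    by (simp add: card_permutations)
  finally show "\<bar>det A\<bar> \<le> fact CARD('n) * c ^ CARD('n)" .
qed

definition dotq :: "('a::finite \<Rightarrow> rat) \<Rightarrow> ('a \<Rightarrow> rat) \<Rightarrow> rat" where
  "dotq u w = (\<Sum>\<sigma>\<in>UNIV. u \<sigma> * w \<sigma>)"

lemma dotq_lin: "dotq u (\<lambda>\<sigma>. a * w \<sigma> + b * z \<sigma>) = a * dotq u w + b * dotq u z"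
  by (simp add: dotq_def sum.distrib sum_distrib_left algebra_simps)

lemma dotq_sq: "u \<noteq> (\<lambda>_. 0) \<Longrightarrow> dotq u u > 0"
proof -
  assume "u \<noteq> (\<lambda>_. 0)"
  then obtain s where s: "u s \<noteq> 0" by auto
  have "0 < (u s)^2" using s by simp
  also have "\<dots> = u s * u s" by (simp add: power2_eq_square)
  also have "\<dots> \<le> dotq u u" unfolding dotq_def
    by (rule member_le_sum) auto
  finally show ?thesis .
qed


lemma gordan:
  fixes v :: "'i \<Rightarrow> ('a::finite \<Rightarrow> rat)"
  assumes "finite I"
    and "\<And>lam. (\<forall>i\<in>I. lam i \<ge> 0) \<Longrightarrow> (\<forall>\<sigma>. (\<Sum>i\<in>I. lam i * v i \<sigma>) = 0) \<Longrightarrow> (\<forall>i\<in>I. lam i = 0)"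
  shows "\<exists>\<phi>. \<forall>i\<in>I. dotq (v i) \<phi> > 0"
  using assms
proof (induction I arbitrary: v rule: finite_induct)
  case empty
  then show ?case by auto
next
  case (insert a I0)
  have hyp0: "\<forall>i\<in>I0. lam i = 0" if "\<forall>i\<in>I0. lam i \<ge> 0" "\<forall>\<sigma>. (\<Sum>i\<in>I0. lam i * v i \<sigma>) = 0" for lam
  proof -
    let ?l = "lam(a := 0)"
    have "(\<Sum>i\<in>insert a I0. ?l i * v i \<sigma>) = (\<Sum>i\<in>I0. lam i * v i \<sigma>)" for \<sigma>
      using insert.hyps by (auto intro!: sum.cong)
    then have "\<forall>i\<in>insert a I0. ?l i = 0"
      using that by (intro insert.prems) auto
    then show ?thesis using insert.hyps by (metis fun_upd_other insertCI)
  qed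
  obtain \<phi>0 where phi0: "\<forall>i\<in>I0. dotq (v i) \<phi>0 > 0"
    using insert.IH[of v] hyp0 by blast
  define \<alpha> where "\<alpha> = dotq (v a) \<phi>0"
  consider "\<alpha> > 0" | "\<alpha> = 0" | "\<alpha> < 0" by linarith
  then show ?case
  proof cases
    case 1 then show ?thesis using phi0 \<alpha>_def by auto
  next
    case 2
    have va: "v a \<noteq> (\<lambda>_. 0)"
    proof
      assume va0: "v a = (\<lambda>_. 0)"
      let ?l = "(\<lambda>_. 0)(a := 1::rat)"
      have "(\<Sum>i\<in>insert a I0. ?l i * v i \<sigma>) = 0" for \<sigma>
        using insert.hyps va0 by (auto intro!: sum.neutral)
      then have "\<forall>i\<in>insert a I0. ?l i = 0" by (intro insert.prems) auto
      then show False by auto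
    qed
    define N where "N = 1 + (\<Sum>i\<in>I0. \<bar>dotq (v i) (v a)\<bar> / dotq (v i) \<phi>0)"
    define \<phi> where "\<phi> = (\<lambda>\<sigma>. 1 * v a \<sigma> + N * \<phi>0 \<sigma>)"
    have "dotq (v i) \<phi> > 0" if i: "i \<in> insert a I0" for i
    proof (cases "i = a")
      case True
      then show ?thesis using dotq_sq[OF va] 2 unfolding \<phi>_def dotq_lin \<alpha>_def by simp
    next
      case False
      then have iI: "i \<in> I0" using i by auto
      have d: "dotq (v i) \<phi>0 > 0" using phi0 iI by auto
      have "\<bar>dotq (v i) (v a)\<bar> / dotq (v i) \<phi>0 \<le> (\<Sum>i\<in>I0. \<bar>dotq (v i) (v a)\<bar> / dotq (v i) \<phi>0)"
        by (rule member_le_sum[OF iI]) (use phi0 insert.hyps in auto)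
      then have "N \<ge> 1 + \<bar>dotq (v i) (v a)\<bar> / dotq (v i) \<phi>0" unfolding N_def by simp
      then have "N * dotq (v i) \<phi>0 \<ge> (1 + \<bar>dotq (v i) (v a)\<bar> / dotq (v i) \<phi>0) * dotq (v i) \<phi>0"
        using d by (simp add: mult_right_mono)
      then have "N * dotq (v i) \<phi>0 \<ge> dotq (v i) \<phi>0 + \<bar>dotq (v i) (v a)\<bar>"
        using d by (simp add: algebra_simps)
      then show ?thesis using d unfolding \<phi>_def dotq_lin by linarith
    qed
    then show ?thesis by blast
  next
    case 3
    define c where "c = - \<alpha>"
    have c: "c > 0" using 3 c_def by simp
    define w where "w = (\<lambda>i \<sigma>. dotq (v i) \<phi>0 * v a \<sigma> + c * v i \<sigma>)"
    have hypw: "\<forall>i\<in>I0. lam i = 0" if l0: "\<forall>i\<in>I0. lam i \<ge> 0" and ls: "\<forall>\<sigma>. (\<Sum>i\<in>I0. lam i * w i \<sigma>) = 0" for lam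
    proof -
      define l where "l = (\<lambda>i. c * lam i)(a := (\<Sum>i\<in>I0. lam i * dotq (v i) \<phi>0))"
      have "(\<Sum>i\<in>insert a I0. l i * v i \<sigma>) = (\<Sum>i\<in>I0. lam i * w i \<sigma>)" for \<sigma>
      proof -
        have "(\<Sum>i\<in>insert a I0. l i * v i \<sigma>) = l a * v a \<sigma> + (\<Sum>i\<in>I0. l i * v i \<sigma>)"
          using insert.hyps by simp
        also have "(\<Sum>i\<in>I0. l i * v i \<sigma>) = (\<Sum>i\<in>I0. c * lam i * v i \<sigma>)"
          using insert.hyps by (auto simp: l_def intro!: sum.cong)
        finally show ?thesis
          by (simp add: l_def w_def sum.distrib sum_distrib_left sum_distrib_right algebra_simps)
      qed
      moreover have "\<forall>i\<in>insert a I0. l i \<ge> 0"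
        using l0 phi0 c insert.hyps by (auto simp: l_def intro!: sum_nonneg)
      ultimately have "\<forall>i\<in>insert a I0. l i = 0" using ls by (intro insert.prems) auto
      then show ?thesis using c insert.hyps by (auto simp: l_def split: if_splits)
    qed
    obtain \<psi> where psi: "\<forall>i\<in>I0. dotq (w i) \<psi> > 0"
      using insert.IH[of w] hypw by blast
    define \<phi>1 where "\<phi>1 = (\<lambda>\<sigma>. c * \<psi> \<sigma> + dotq (v a) \<psi> * \<phi>0 \<sigma>)"
    have e: "dotq (v i) \<phi>1 = dotq (w i) \<psi>" for i
      unfolding \<phi>1_def dotq_lin w_def by (simp add: dotq_def sum.distrib sum_distrib_left algebra_simps)
    have ea: "dotq (v a) \<phi>1 = 0"
      unfolding \<phi>1_def dotq_lin using c_def \<alpha>_def by simp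
    define N where "N = 1 + (\<Sum>i\<in>I0. dotq (v i) \<phi>0 / dotq (v i) \<phi>1)"
    define \<phi> where "\<phi> = (\<lambda>\<sigma>. N * \<phi>1 \<sigma> + (-1) * \<phi>0 \<sigma>)"
    have "dotq (v i) \<phi> > 0" if i: "i \<in> insert a I0" for i
    proof (cases "i = a")
      case True
      then show ?thesis using ea c unfolding \<phi>_def dotq_lin c_def \<alpha>_def by simp
    next
      case False
      then have iI: "i \<in> I0" using i by auto
      have d: "dotq (v i) \<phi>0 > 0" using phi0 iI by auto
      have d1: "dotq (v i) \<phi>1 > 0" using psi iI e by auto
      have "dotq (v i) \<phi>0 / dotq (v i) \<phi>1 \<le> (\<Sum>i\<in>I0. dotq (v i) \<phi>0 / dotq (v i) \<phi>1)"
        by (rule member_le_sum[OF iI]) (use phi0 psi e insert.hyps in \<open>auto intro: divide_nonneg_pos less_imp_le\<close>)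
      then have "N \<ge> 1 + dotq (v i) \<phi>0 / dotq (v i) \<phi>1" unfolding N_def by simp
      then have "N * dotq (v i) \<phi>1 \<ge> (1 + dotq (v i) \<phi>0 / dotq (v i) \<phi>1) * dotq (v i) \<phi>1"
        using d1 by (simp add: mult_right_mono)
      then have "N * dotq (v i) \<phi>1 \<ge> dotq (v i) \<phi>1 + dotq (v i) \<phi>0"
        using d1 by (simp add: algebra_simps)
      then show ?thesis using d1 unfolding \<phi>_def dotq_lin by linarith
    qed
    then show ?thesis by blast
  qed
qed


lemma integral_sep:
  fixes R :: "(real^'n) set"
  assumes fin: "finite R" and ent: "\<And>r i. r \<in> R \<Longrightarrow> r$i \<in> \<int> \<and> \<bar>r$i\<bar> \<le> c"
    and c1: "c \<ge> 1" and ex: "\<exists>\<phi>. \<forall>r\<in>R. inner r \<phi> > 0"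
  shows "\<exists>\<psi>. (\<forall>r\<in>R. inner r \<psi> > 0) \<and> (\<forall>i. \<psi>$i \<in> \<int> \<and> \<bar>\<psi>$i\<bar> \<le> fact CARD('n) * c ^ CARD('n))"
proof -
  obtain \<phi>0 where phi0: "\<forall>r\<in>R. inner r \<phi>0 > 0" using ex by blast
  define k where "k = (\<Sum>r\<in>R. 1 / inner r \<phi>0)"
  define F where "F = {\<phi>. \<forall>r\<in>R. inner r \<phi> \<ge> 1}"
  have "k *\<^sub>R \<phi>0 \<in> F"
  proof -
    have "inner r (k *\<^sub>R \<phi>0) \<ge> 1" if r: "r \<in> R" for r
    proof -
      have p: "inner r \<phi>0 > 0" using phi0 r by auto
      have "1 / inner r \<phi>0 \<le> k" unfolding k_def
        by (rule member_le_sum[OF r]) (use phi0 fin in auto)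
      then show ?thesis using p by (simp add: divide_le_eq)
    qed
    then show ?thesis unfolding F_def by auto
  qed
  define E where "E = (\<lambda>\<phi>. {r\<in>R. inner r \<phi> = 1} \<union> {axis i 1 | i. \<phi>$i = 0})"
  obtain \<phi> where phiF: "\<phi> \<in> F" and max: "\<forall>y. y \<in> F \<longrightarrow> dim (E y) \<le> dim (E \<phi>)"
    using ex_has_greatest_nat[of "\<lambda>y. y \<in> F" "k *\<^sub>R \<phi>0" "\<lambda>y. dim (E y)" "CARD('n) + 1"]
      \<open>k *\<^sub>R \<phi>0 \<in> F\<close> dim_subset_UNIV_cart by (metis less_Suc_eq_le Suc_eq_plus1)
  have full: "span (E \<phi>) = UNIV"
  proof (rule ccontr)
    assume nfull: "span (E \<phi>) \<noteq> UNIV"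
    obtain d where d0: "d \<noteq> 0" and dperp: "\<forall>x\<in>span (E \<phi>). inner d x = 0"
      using span_not_UNIV_orthogonal[OF nfull] by blast
    obtain i where di: "d$i \<noteq> 0" using d0 by (metis vec_eq_iff zero_index)
    have phii: "\<phi>$i \<noteq> 0"
    proof
      assume "\<phi>$i = 0"
      then have "axis i 1 \<in> E \<phi>" unfolding E_def by auto
      then have "inner d (axis i 1) = 0" using dperp span_base by blast
      then show False using di by (simp add: inner_axis)
    qed
    define s where "s = (if d$i * \<phi>$i < 0 then d else -d)"
    have sperp: "\<forall>x\<in>span (E \<phi>). inner s x = 0" using dperp by (simp add: s_def)
    have sE: "inner s x = 0" if "x \<in> E \<phi>" for x using sperp span_base that by blast
    have si: "s$i * \<phi>$i < 0" using di phii
      by (auto simp: s_def mult_less_0_iff linorder_neq_iff)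
    define TR where "TR = (\<lambda>r. (inner r \<phi> - 1) / (- inner r s)) ` {r\<in>R. inner r s < 0}"
    define TA where "TA = (\<lambda>j. - (\<phi>$j) / s$j) ` {j. s$j * \<phi>$j < 0}"
    define T where "T = TR \<union> TA"
    have finT: "finite T" unfolding T_def TR_def TA_def using fin by auto
    have neT: "T \<noteq> {}" unfolding T_def TA_def using si by auto
    have Tpos: "\<forall>x\<in>T. x > 0"
    proof
      fix x assume "x \<in> T"
      then consider (r) r where "r \<in> R" "inner r s < 0" "x = (inner r \<phi> - 1) / (- inner r s)"
        | (j) j where "s$j * \<phi>$j < 0" "x = - (\<phi>$j) / s$j"
        unfolding T_def TR_def TA_def by auto
      then show "x > 0"
      proof cases
        case r
        have "inner r \<phi> \<ge> 1" using phiF r unfolding F_def by auto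
        moreover have "inner r \<phi> \<noteq> 1"
        proof
          assume "inner r \<phi> = 1"
          then have "r \<in> E \<phi>" using r unfolding E_def by auto
          then show False using sE r by (simp add: inner_commute)
        qed
        ultimately show ?thesis using r by (simp add: divide_pos_neg)
      next
        case j
        then show ?thesis by (auto simp: mult_less_0_iff divide_neg_pos divide_pos_neg)
      qed
    qed
    define t where "t = Min T"
    have tT: "t \<in> T" unfolding t_def using finT neT by simp
    have tpos: "t > 0" using Tpos tT by auto
    have tle: "t \<le> x" if "x \<in> T" for x unfolding t_def using finT that by simp
    define \<phi>' where "\<phi>' = \<phi> + t *\<^sub>R s"
    have ip: "inner r \<phi>' = inner r \<phi> + t * inner r s" for r
      by (simp add: \<phi>'_def inner_add_right)
    have cp: "\<phi>'$j = \<phi>$j + t * s$j" for j by (simp add: \<phi>'_def)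
    have phi'F: "\<phi>' \<in> F"
    proof -
      have "inner r \<phi>' \<ge> 1" if r: "r \<in> R" for r
      proof (cases "inner r s < 0")
        case False
        then have "t * inner r s \<ge> 0" using tpos by simp
        moreover have "inner r \<phi> \<ge> 1" using phiF r unfolding F_def by auto
        ultimately show ?thesis unfolding ip by linarith
      next
        case True
        then have "(inner r \<phi> - 1) / (- inner r s) \<in> T" unfolding T_def TR_def using r by auto
        then have "t \<le> (inner r \<phi> - 1) / (- inner r s)" by (rule tle)
        moreover have "- inner r s > 0" using True by simp
        ultimately have "t * (- inner r s) \<le> inner r \<phi> - 1" by (metis pos_le_divide_eq)
        then show ?thesis unfolding ip by simp
      qed
      then show ?thesis unfolding F_def by auto
    qed
    have EE: "E \<phi> \<subseteq> E \<phi>'"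
    proof
      fix x assume x: "x \<in> E \<phi>"
      have sx: "inner s x = 0" using sE x .
      from x consider "x \<in> R" "inner x \<phi> = 1" | j where "x = axis j 1" "\<phi>$j = 0"
        unfolding E_def by auto
      then show "x \<in> E \<phi>'"
      proof cases
        case 1 then show ?thesis using sx unfolding E_def ip by (auto simp: inner_commute)
      next
        case 2
        then have "s$j = 0" using sx by (simp add: inner_axis)
        then show ?thesis using 2 unfolding E_def cp by auto
      qed
    qed
    obtain v where vE: "v \<in> E \<phi>'" and sv: "inner s v \<noteq> 0"
    proof -
      from tT consider (r) r where "r \<in> R" "inner r s < 0" "t = (inner r \<phi> - 1) / (- inner r s)"
        | (j) j where "s$j * \<phi>$j < 0" "t = - (\<phi>$j) / s$j"
        unfolding T_def TR_def TA_def by auto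
      then show ?thesis
      proof cases
        case r
        then have "t * (- inner r s) = inner r \<phi> - 1" by simp
        then have "inner r \<phi>' = 1" unfolding ip by (simp add: algebra_simps)
        then have "r \<in> E \<phi>'" using r unfolding E_def by auto
        moreover have "inner s r \<noteq> 0" using r by (simp add: inner_commute)
        ultimately show ?thesis using that by blast
      next
        case j
        then have "s$j \<noteq> 0" by auto
        then have "t * s$j = - \<phi>$j" using j by simp
        then have "\<phi>'$j = 0" unfolding cp by simp
        then have "axis j 1 \<in> E \<phi>'" unfolding E_def by auto
        moreover have "inner s (axis j 1) \<noteq> 0" using \<open>s$j \<noteq> 0\<close> by (simp add: inner_axis)
        ultimately show ?thesis using that by blast
      qed
    qed
    have "v \<notin> span (E \<phi>)" using sperp sv by blast
    moreover have "v \<in> span (E \<phi>')" using vE span_base by blast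
    moreover have "span (E \<phi>) \<subseteq> span (E \<phi>')" using EE span_mono by blast
    ultimately have "span (E \<phi>) \<subset> span (E \<phi>')" by blast
    then have "dim (E \<phi>) < dim (E \<phi>')" by (rule dim_psubset)
    then show False using max phi'F by fastforce
  qed
  have finE: "finite (E \<phi>)"
  proof -
    have "{axis i (1::real) | i. \<phi>$i = 0} \<subseteq> range (\<lambda>i. axis i 1)" by auto
    then show ?thesis unfolding E_def using fin finite_subset by auto
  qed
  obtain B where BE: "B \<subseteq> E \<phi>" and indB: "independent B" and EB: "E \<phi> \<subseteq> span B"
    by (rule maximal_independent_subset)
  have spanB: "span B = UNIV"
    using full EB by (metis span_minimal subspace_span top.extremum_uniqueI)
  have cardB: "card B = CARD('n)"
    using basis_card_eq_dim[of B UNIV] indB spanB dim_UNIV by simp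
  have finB: "finite B" using BE finE finite_subset by blast
  obtain h where h: "bij_betw h (UNIV::'n set) B"
    using finite_same_card_bij[of "UNIV::'n set" B] finB cardB by auto
  define M where "M = (\<chi> i. h i)"
  have rowsM: "rows M = B"
    using h unfolding rows_def row_def M_def bij_betw_def by auto
  have "\<exists>B'. B' ** M = mat 1"
    using matrix_left_invertible_span_rows[of M] rowsM spanB by simp
  then have "invertible M" unfolding invertible_def using matrix_left_right_inverse by blast
  then have detM: "det M \<noteq> 0" by (simp add: invertible_det_nz)
  have hE: "h i \<in> E \<phi>" for i using h BE bij_betwE by blast
  have Mi: "M$i = h i" for i by (simp add: M_def)
  have Mv: "(M *v \<phi>)$i = inner (h i) \<phi>" for i
    by (simp add: matrix_vector_mult_def inner_vec_def Mi)
  have ent_h: "h i $ j \<in> \<int> \<and> \<bar>h i $ j\<bar> \<le> c" for i j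
  proof -
    from hE[of i] consider "h i \<in> R" | l where "h i = axis l 1" unfolding E_def by auto
    then show ?thesis
    proof cases
      case 1 then show ?thesis using ent by blast
    next
      case 2 then show ?thesis using c1 by (auto simp: axis_def)
    qed
  qed
  have bv: "(M *v \<phi>)$i \<in> \<int> \<and> \<bar>(M *v \<phi>)$i\<bar> \<le> c" for i
  proof -
    from hE[of i] consider "inner (h i) \<phi> = 1" | l where "h i = axis l 1" "\<phi>$l = 0"
      unfolding E_def by auto
    then show ?thesis
    proof cases
      case 1 then show ?thesis using c1 Mv by simp
    next
      case 2 then show ?thesis using c1 Mv by (simp add: inner_axis')
    qed
  qed
  define Mk where "Mk = (\<lambda>k. (\<chi> i j. if j = k then (M *v \<phi>)$i else M$i$j) :: real^'n^'n)"
  have detMk: "det (Mk k) = \<phi>$k * det M" for k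
    unfolding Mk_def by (rule cramer_lemma)
  have bdMk: "det (Mk k) \<in> \<int> \<and> \<bar>det (Mk k)\<bar> \<le> fact CARD('n) * c ^ CARD('n)" for k
    by (rule det_int_bound) (auto simp: Mk_def Mi bv ent_h)
  define \<psi> where "\<psi> = \<bar>det M\<bar> *\<^sub>R \<phi>"
  have psik: "\<psi>$k = sgn (det M) * det (Mk k)" for k
    using detM by (simp add: \<psi>_def detMk abs_sgn sgn_mult_self_eq[symmetric] algebra_simps)
  have "\<psi>$k \<in> \<int> \<and> \<bar>\<psi>$k\<bar> \<le> fact CARD('n) * c ^ CARD('n)" for k
    using bdMk[of k] detM unfolding psik by (auto simp: abs_mult abs_sgn_eq sgn_real_def)
  moreover have "inner r \<psi> > 0" if "r \<in> R" for r
  proof -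
    have "inner r \<phi> \<ge> 1" using phiF that unfolding F_def by auto
    then show ?thesis using detM by (simp add: \<psi>_def)
  qed
  ultimately show ?thesis by blast
qed

hide_const (open) Topology_Euclidean_Space.box

definition vr :: "('a::finite \<Rightarrow> rat) \<Rightarrow> real^'a" where
  "vr x = (\<chi> \<sigma>. real_of_rat (x \<sigma>))"

lemma inner_vr: "inner (vr x) (vr y) = real_of_rat (dotq x y)"
  by (simp add: vr_def inner_vec_def dotq_def of_rat_sum of_rat_mult)

theorem lemma8:
  "\<exists>p :: real poly. \<forall>C7::nat. \<forall>P Q :: ('a::finite \<Rightarrow> rat) set.
     P \<subseteq> box C7 \<longrightarrow> Q \<subseteq> box C7 \<longrightarrow> (\<lambda>_. 0) \<notin> P \<longrightarrow> (\<lambda>_. 0) \<notin> Q \<longrightarrow>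
     pcone P \<inter> pcone Q = {\<lambda>_. 0} \<longrightarrow>
     (\<exists>\<phi> :: 'a \<Rightarrow> int.
        (\<forall>x\<in>P. (\<Sum>\<sigma>\<in>UNIV. of_int (\<phi> \<sigma>) * x \<sigma>) > 0) \<and>
        (\<forall>x\<in>Q. (\<Sum>\<sigma>\<in>UNIV. of_int (\<phi> \<sigma>) * x \<sigma>) < 0) \<and>
        real_of_int (\<Sum>\<sigma>\<in>UNIV. \<bar>\<phi> \<sigma>\<bar>) \<le> poly p (real C7))"
proof -
  define n where "n = CARD('a)"
  define p where "p = [: real n * fact n :] * [:1,1:] ^ n"
  have pe: "poly p x = real n * fact n * (x + 1) ^ n" for x
    by (simp add: p_def poly_power algebra_simps)
  show ?thesis
  proof (rule exI[of _ p], intro allI impI)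
    fix C7 :: nat and P Q :: "('a \<Rightarrow> rat) set"
    assume PB: "P \<subseteq> box C7" and QB: "Q \<subseteq> box C7" and P0: "(\<lambda>_. 0) \<notin> P" and Q0: "(\<lambda>_. 0) \<notin> Q"
      and cone: "pcone P \<inter> pcone Q = {\<lambda>_. 0}"
    define c where "c = real C7 + 1"
    have finbox: "finite (box C7 :: ('a \<Rightarrow> rat) set)"
    proof -
      have "box C7 \<subseteq> {f::'a\<Rightarrow>rat. \<forall>x. (x \<in> UNIV \<longrightarrow> f x \<in> of_nat ` {..C7}) \<and> (x \<notin> UNIV \<longrightarrow> f x = 0)}"
        unfolding Defs.box_def by (auto simp: image_iff atMost_iff)
      moreover have "finite {f::'a\<Rightarrow>rat. \<forall>x. (x \<in> UNIV \<longrightarrow> f x \<in> of_nat ` {..C7}) \<and> (x \<notin> UNIV \<longrightarrow> f x = 0)}"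
        by (rule finite_set_of_finite_funs) auto
      ultimately show ?thesis using finite_subset by blast
    qed
    have finP: "finite P" and finQ: "finite Q" using PB QB finbox finite_subset by blast+
    have nonneg: "x \<sigma> \<ge> 0" if xb: "x \<in> box C7" for x :: "'a \<Rightarrow> rat" and \<sigma>
    proof -
      obtain k :: nat where "x \<sigma> = of_nat k" using xb unfolding Defs.box_def by blast
      then show ?thesis by simp
    qed
    have nz: "\<exists>\<sigma>. x \<sigma> \<noteq> 0" if "x \<noteq> (\<lambda>_. 0)" for x :: "'a \<Rightarrow> rat"
      using that by auto
    define R where "R = P \<union> uminus ` Q"
    have finR: "finite R" unfolding R_def using finP finQ by simp
    have disj: "P \<inter> uminus ` Q = {}"
    proof (rule ccontr)
      assume "P \<inter> uminus ` Q \<noteq> {}"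
      then obtain q where q: "q \<in> Q" "- q \<in> P" by auto
      have "(- q) = (\<lambda>_. 0)"
      proof
        fix \<sigma>
        have "(- q) \<sigma> \<ge> 0" using nonneg q PB by blast
        moreover have "q \<sigma> \<ge> 0" using nonneg q QB by blast
        ultimately show "(- q) \<sigma> = 0" by simp
      qed
      then show False using q P0 by simp
    qed
    have hyp: "\<forall>r\<in>R. lam r = 0" if l0: "\<forall>r\<in>R. lam r \<ge> 0" and ls: "\<forall>\<sigma>. (\<Sum>r\<in>R. lam r * id r \<sigma>) = 0" for lam
    proof -
      have sQ: "(\<Sum>r\<in>uminus ` Q. lam r * r \<sigma>) = - (\<Sum>q\<in>Q. lam (- q) * q \<sigma>)" for \<sigma>
        by (subst sum.reindex) (auto simp: inj_on_def sum_negf fun_eq_iff)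
      have eq: "(\<Sum>p\<in>P. lam p * p \<sigma>) = (\<Sum>q\<in>Q. lam (- q) * q \<sigma>)" for \<sigma>
      proof -
        have "(\<Sum>r\<in>R. lam r * r \<sigma>) = (\<Sum>p\<in>P. lam p * p \<sigma>) + (\<Sum>r\<in>uminus ` Q. lam r * r \<sigma>)"
          unfolding R_def by (rule sum.union_disjoint) (use finP finQ disj in auto)
        then show ?thesis using ls sQ[of \<sigma>] by simp
      qed
      define x where "x = (\<lambda>\<sigma>. \<Sum>p\<in>P. lam p * p \<sigma>)"
      have "x \<in> pcone P" unfolding pcone_def x_def
        using l0 unfolding R_def by (intro CollectI exI[of _ lam]) auto
      moreover have "x \<in> pcone Q" unfolding pcone_def x_def eq
        using l0 unfolding R_def by (intro CollectI exI[of _ "\<lambda>q. lam (- q)"]) auto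
      ultimately have x0: "x = (\<lambda>_. 0)" using cone by blast
      have sumz: "\<forall>y\<in>S. f y = 0" if fS: "finite S" and SB: "S \<subseteq> box C7" and S0: "(\<lambda>_. 0) \<notin> S"
        and f0: "\<forall>y\<in>S. f y \<ge> 0" and s0: "\<forall>\<sigma>. (\<Sum>y\<in>S. f y * y \<sigma>) = 0" for S :: "('a \<Rightarrow> rat) set" and f
      proof
        fix y assume y: "y \<in> S"
        obtain \<sigma> where ys: "y \<sigma> \<noteq> 0" using y S0 by (metis (full_types) ext)
        have "\<forall>z\<in>S. f z * z \<sigma> \<ge> 0"
        proof
          fix z assume "z \<in> S"
          then have "f z \<ge> 0" "z \<sigma> \<ge> 0" using f0 SB nonneg by auto
          then show "f z * z \<sigma> \<ge> 0" by simp
        qed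
        then have "\<forall>z\<in>S. f z * z \<sigma> = 0"
          using sum_nonneg_eq_0_iff[of S "\<lambda>z. f z * z \<sigma>"] fS s0 by simp
        then have "f y * y \<sigma> = 0" using y by blast
        then show "f y = 0" using ys by simp
      qed
      have zP: "\<forall>y\<in>P. lam y = 0"
      proof (rule sumz[OF finP PB P0])
        show "\<forall>y\<in>P. 0 \<le> lam y" using l0 unfolding R_def by blast
        show "\<forall>\<sigma>. (\<Sum>y\<in>P. lam y * y \<sigma>) = 0"
        proof
          fix \<sigma> show "(\<Sum>y\<in>P. lam y * y \<sigma>) = 0" using fun_cong[OF x0, of \<sigma>] unfolding x_def by simp
        qed
      qed
      have zQ: "\<forall>y\<in>Q. lam (- y) = 0"
      proof (rule sumz[OF finQ QB Q0])
        show "\<forall>y\<in>Q. 0 \<le> lam (- y)" using l0 unfolding R_def by blast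
        show "\<forall>\<sigma>. (\<Sum>y\<in>Q. lam (- y) * y \<sigma>) = 0"
        proof
          fix \<sigma> show "(\<Sum>y\<in>Q. lam (- y) * y \<sigma>) = 0" using fun_cong[OF x0, of \<sigma>] eq[of \<sigma>] unfolding x_def by simp
        qed
      qed
      show ?thesis using zP zQ unfolding R_def by auto
    qed
    obtain \<phi>q where phiq: "\<forall>r\<in>R. dotq (id r) \<phi>q > 0"
      using gordan[OF finR, of id] hyp by blast
    define R' where "R' = vr ` R"
    have entR: "r' $ i \<in> \<int> \<and> \<bar>r' $ i\<bar> \<le> c" if rR: "r' \<in> R'" for r' i
    proof -
      obtain r where r: "r \<in> R" "r' = vr r" using rR R'_def by auto
      from r(1) consider "r \<in> box C7" | q where "q \<in> box C7" "r = - q"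
        unfolding R_def using PB QB by auto
      then show ?thesis
      proof cases
        case 1
        then obtain k where "k \<le> C7" "r i = of_nat k" unfolding Defs.box_def by blast
        then have "r' $ i = real k" using r by (simp add: vr_def)
        then show ?thesis using \<open>k \<le> C7\<close> by (simp add: c_def)
      next
        case 2
        then obtain k where "k \<le> C7" "q i = of_nat k" unfolding Defs.box_def by blast
        then have "r' $ i = - real k" using r 2 by (simp add: vr_def of_rat_minus)
        then show ?thesis using \<open>k \<le> C7\<close> by (simp add: c_def)
      qed
    qed
    have "\<exists>\<psi>. (\<forall>r\<in>R'. inner r \<psi> > 0) \<and> (\<forall>i. \<psi>$i \<in> \<int> \<and> \<bar>\<psi>$i\<bar> \<le> fact CARD('a) * c ^ CARD('a))"
    proof (rule integral_sep)
      show "finite R'" using finR R'_def by simp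
      show "\<And>r i. r \<in> R' \<Longrightarrow> r $ i \<in> \<int> \<and> \<bar>r $ i\<bar> \<le> c" by (rule entR)
      show "1 \<le> c" by (simp add: c_def)
      show "\<exists>\<phi>. \<forall>r\<in>R'. 0 < inner r \<phi>"
        using phiq by (intro exI[of _ "vr \<phi>q"]) (auto simp: R'_def inner_vr)
    qed
    then obtain \<psi> where psiR: "\<forall>r\<in>R'. inner r \<psi> > 0"
      and psiI: "\<And>i. \<psi>$i \<in> \<int>" and psiB: "\<And>i. \<bar>\<psi>$i\<bar> \<le> fact CARD('a) * c ^ CARD('a)" by blast
    define \<phi> where "\<phi> = (\<lambda>\<sigma>. \<lfloor>\<psi>$\<sigma>\<rfloor>)"
    have phie: "real_of_int (\<phi> \<sigma>) = \<psi>$\<sigma>" for \<sigma>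
      using psiI[of \<sigma>] unfolding \<phi>_def by (metis Ints_cases floor_of_int)
    have key: "real_of_rat (\<Sum>\<sigma>\<in>UNIV. of_int (\<phi> \<sigma>) * x \<sigma>) = inner (vr x) \<psi>" for x
      by (simp add: of_rat_sum of_rat_mult vr_def inner_vec_def phie mult.commute)
    show "\<exists>\<phi> :: 'a \<Rightarrow> int.
        (\<forall>x\<in>P. (\<Sum>\<sigma>\<in>UNIV. of_int (\<phi> \<sigma>) * x \<sigma>) > 0) \<and>
        (\<forall>x\<in>Q. (\<Sum>\<sigma>\<in>UNIV. of_int (\<phi> \<sigma>) * x \<sigma>) < 0) \<and>
        real_of_int (\<Sum>\<sigma>\<in>UNIV. \<bar>\<phi> \<sigma>\<bar>) \<le> poly p (real C7)"
    proof (intro exI[of _ \<phi>] conjI ballI)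
      fix x assume "x \<in> P"
      then have "vr x \<in> R'" unfolding R'_def R_def by auto
      then have "real_of_rat (\<Sum>\<sigma>\<in>UNIV. of_int (\<phi> \<sigma>) * x \<sigma>) > 0" using psiR key by auto
      then show "(\<Sum>\<sigma>\<in>UNIV. of_int (\<phi> \<sigma>) * x \<sigma>) > 0" by simp
    next
      fix x assume "x \<in> Q"
      then have "vr (- x) \<in> R'" unfolding R'_def R_def by auto
      then have "real_of_rat (\<Sum>\<sigma>\<in>UNIV. of_int (\<phi> \<sigma>) * (- x) \<sigma>) > 0" using psiR key by metis
      then show "(\<Sum>\<sigma>\<in>UNIV. of_int (\<phi> \<sigma>) * x \<sigma>) < 0" by (simp add: sum_negf)
    next
      have "real_of_int (\<Sum>\<sigma>\<in>UNIV. \<bar>\<phi> \<sigma>\<bar>) = (\<Sum>\<sigma>\<in>UNIV. \<bar>\<psi>$\<sigma>\<bar>)"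
        by (simp add: phie[symmetric])
      also have "\<dots> \<le> of_nat (card (UNIV::'a set)) * (fact CARD('a) * c ^ CARD('a))"
        by (rule sum_bounded_above) (use psiB in auto)
      also have "\<dots> = poly p (real C7)" by (simp add: pe c_def n_def)
      finally show "real_of_int (\<Sum>\<sigma>\<in>UNIV. \<bar>\<phi> \<sigma>\<bar>) \<le> poly p (real C7)" .
    qed
  qed
qed

end
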